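(* Let $n$ elements be grouped into $k$ (possibly overlapping) clusters $\mathcal{N}_1,\dots,\mathcal{N}_k\subseteq[n]$, each element belonging to at least one and at most $\Delta$ clusters. Suppose a noiseless quantized oracle, queried with $(i,j)$, returns $1$ if $i$ and $j$ belong to a common cluster and $0$ otherwise. Assume that for every cluster $i\in[k]$, $\left|\mathcal{N}_i\setminus\bigcup_{j\neq i}\mathcal{N}_j\right|>\alpha n$ for some $\alpha>0$. Let $S$ have size with $\alpha|S|=\log k+\log n$. Then the following algorithm recovers the clusters using $\binom{|S|}{2}+|S|\cdot(n-|S|)$ queries (with high probability over the random choice of $S$): choose $S\subseteq[n]$ uniformly at random and query all pairs in $S$; form the graph on vertex set $S$ with an edge $\{i,j\}$ iff the oracle returns $1$; construct maximal cliques of this graph covering all its edges, each maximal clique forming a cluster; query each element outside $S$ with all elements of $S$ and assign it to every cluster all of whose elements it tests positive with.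
   Context: No statistical assumptions are made on the clusters; the algorithm does not need to know $\Delta$. *)

theory Defs
  imports "HOL-Probability.Probability"
begin

(* Elements are 0..<n, clusters are N 0, ..., N (k-1). *)

definition same_cluster :: "(nat \<Rightarrow> nat set) \<Rightarrow> nat \<Rightarrow> nat \<Rightarrow> nat \<Rightarrow> bool" where
  "same_cluster N k i j \<longleftrightarrow> (\<exists>l<k. i \<in> N l \<and> j \<in> N l)"

definition queries :: "nat \<Rightarrow> nat set \<Rightarrow> nat set set" where
  "queries n S = {{i, j} | i j. i \<in> S \<and> j \<in> S \<and> i \<noteq> j}
                 \<union> {{i, j} | i j. i \<in> S \<and> j \<in> {0..<n} - S}"

definition is_clique :: "(nat \<Rightarrow> nat \<Rightarrow> bool) \<Rightarrow> nat set \<Rightarrow> nat set \<Rightarrow> bool" where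
  "is_clique Q S C \<longleftrightarrow> C \<subseteq> S \<and> (\<forall>x\<in>C. \<forall>y\<in>C. x \<noteq> y \<longrightarrow> Q x y)"

definition is_maximal_clique :: "(nat \<Rightarrow> nat \<Rightarrow> bool) \<Rightarrow> nat set \<Rightarrow> nat set \<Rightarrow> bool" where
  "is_maximal_clique Q S C \<longleftrightarrow> is_clique Q S C \<and> C \<noteq> {} \<and>
     (\<forall>D. is_clique Q S D \<and> C \<subseteq> D \<longrightarrow> D = C)"

definition covers_graph :: "(nat \<Rightarrow> nat \<Rightarrow> bool) \<Rightarrow> nat set \<Rightarrow> nat set set \<Rightarrow> bool" where
  "covers_graph Q S F \<longleftrightarrow> (\<forall>x\<in>S. \<exists>C\<in>F. x \<in> C) \<and>
     (\<forall>x\<in>S. \<forall>y\<in>S. x \<noteq> y \<and> Q x y \<longrightarrow> (\<exists>C\<in>F. x \<in> C \<and> y \<in> C))"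

definition maximal_clique_cover :: "(nat \<Rightarrow> nat \<Rightarrow> bool) \<Rightarrow> nat set \<Rightarrow> nat set set \<Rightarrow> bool" where
  "maximal_clique_cover Q S F \<longleftrightarrow> (\<forall>C\<in>F. is_maximal_clique Q S C) \<and> covers_graph Q S F \<and>
     (\<forall>F'. F' \<subset> F \<longrightarrow> \<not> covers_graph Q S F')"

definition extend_cluster :: "(nat \<Rightarrow> nat \<Rightarrow> bool) \<Rightarrow> nat \<Rightarrow> nat set \<Rightarrow> nat set \<Rightarrow> nat set" where
  "extend_cluster Q n S C = C \<union> {x \<in> {0..<n} - S. \<forall>y\<in>C. Q x y}"

definition recovers :: "(nat \<Rightarrow> nat set) \<Rightarrow> nat \<Rightarrow> nat \<Rightarrow> nat set \<Rightarrow> bool" where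
  "recovers N k n S \<longleftrightarrow> (\<exists>F. maximal_clique_cover (same_cluster N k) S F) \<and>
     (\<forall>F. maximal_clique_cover (same_cluster N k) S F \<longrightarrow>
          extend_cluster (same_cluster N k) n S ` F = N ` {..<k})"

end

theory Submission imports Defs begin

lemma choose_step: "(m choose Suc s) * Suc s = (m choose s) * (m - s)"
proof (cases m)
  case 0 then show ?thesis by simp
next
  case (Suc m') 
  have "(m - s) * (m choose s) = m * ((m - 1) choose s)" by (rule binomial_absorb_comp)
  moreover have "Suc m' * (m' choose s) = (Suc m' choose Suc s) * Suc s" by (rule Suc_times_binomial_eq)
  ultimately show ?thesis using Suc by (simp add: mult.commute)
qed

lemma choose_ratio:
  fixes m n s :: nat assumes "m \<le> n"
  shows "real (m choose s) * real n ^ s \<le> real m ^ s * real (n choose s)"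
proof (induction s)
  case 0 then show ?case by simp
next
  case (Suc s)
  have e1: "real (m choose Suc s) * (Suc s) = real (m choose s) * real (m - s)"
    using choose_step[of m s] by (metis of_nat_mult)
  have e2: "real (n choose Suc s) * (Suc s) = real (n choose s) * real (n - s)"
    using choose_step[of n s] by (metis of_nat_mult)
  have key: "real (m - s) * real n \<le> real m * real (n - s)"
  proof (cases "s \<le> m")
    case True
    then have "s \<le> n" using assms by simp
    then show ?thesis using True assms by (simp add: of_nat_diff algebra_simps mult_right_mono)
  next
    case False then show ?thesis by simp
  qed
  have "real (m choose Suc s) * real n ^ Suc s * real (Suc s) = (real (m choose Suc s) * real (Suc s)) * (real n ^ s * real n)"
    by (simp only: power_Suc mult_ac)
  also have "\<dots> = (real (m choose s) * real n ^ s) * (real (m - s) * real n)"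
    unfolding e1 by (simp only: mult_ac)
  also have "\<dots> \<le> (real m ^ s * real (n choose s)) * (real (m - s) * real n)"
    using Suc.IH by (intro mult_right_mono) auto
  also have "\<dots> \<le> (real m ^ s * real (n choose s)) * (real m * real (n - s))"
    using key by (intro mult_left_mono) auto
  also have "\<dots> = real m ^ Suc s * (real (n choose Suc s) * real (Suc s))"
    unfolding e2 by (simp only: power_Suc mult_ac)
  finally show ?case by (simp only: mult_ac mult_le_cancel_left_pos)
qed

lemma queries_card:
  assumes S: "S \<subseteq> {0..<n}" "card S = s"
  shows "card (queries n S) = (s choose 2) + s * (n - s)"
proof -
  have fS: "finite S" using S finite_subset by blast
  define A where "A = {{i, j} | i j. i \<in> S \<and> j \<in> S \<and> i \<noteq> j}"
  define B where "B = {{i, j} | i j. i \<in> S \<and> j \<in> {0..<n} - S}"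
  have A: "A = {X. X \<subseteq> S \<and> card X = 2}"
    unfolding A_def by (auto simp: card_2_iff)
  have cA: "card A = s choose 2" unfolding A using n_subsets[OF fS] S by simp
  have B: "B = (\<lambda>(i,j). {i,j}) ` (S \<times> ({0..<n} - S))" unfolding B_def by force
  have inj: "inj_on (\<lambda>(i,j). {i,j}) (S \<times> ({0..<n} - S))"
    by (auto simp: inj_on_def doubleton_eq_iff)
  have cB: "card B = s * (n - s)"
    unfolding B using card_image[OF inj] S by (simp add: card_cartesian_product card_Diff_subset fS)
  have fA: "finite A" unfolding A using fS by simp
  have fB: "finite B" unfolding B using fS by simp
  have dis: "A \<inter> B = {}" unfolding A_def B_def by (auto simp: doubleton_eq_iff)
  show ?thesis unfolding queries_def A_def[symmetric] B_def[symmetric]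
    using card_Un_disjoint[OF fA fB dis] cA cB by simp
qed

lemma recovery:
  fixes n k :: nat and N :: "nat \<Rightarrow> nat set" and S :: "nat set"
  assumes sub: "\<And>i. i < k \<Longrightarrow> N i \<subseteq> {0..<n}"
    and atleast: "\<And>x. x < n \<Longrightarrow> card {i. i < k \<and> x \<in> N i} \<ge> 1"
    and S: "S \<subseteq> {0..<n}"
    and hit: "\<And>i. i < k \<Longrightarrow> \<exists>p\<in>S. p \<in> N i \<and> (\<forall>j<k. p \<in> N j \<longrightarrow> j = i)"
  shows "recovers N k n S"
proof -
  define Q where "Q = same_cluster N k"
  define F0 where "F0 = (\<lambda>i. S \<inter> N i) ` {..<k}"
  have Qp: "Q p y \<longleftrightarrow> y \<in> N i" if "i < k" "p \<in> N i" "\<forall>j<k. p \<in> N j \<longrightarrow> j = i" for i p y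
    using that unfolding Q_def same_cluster_def by blast
  have clq: "is_clique Q S (S \<inter> N i)" if "i < k" for i
    using that unfolding is_clique_def Q_def same_cluster_def by blast
  have uniq: "C = S \<inter> N i" if "i < k" "p \<in> N i" "\<forall>j<k. p \<in> N j \<longrightarrow> j = i" "p \<in> C"
     "is_maximal_clique Q S C" for i p C
  proof -
    have Cc: "is_clique Q S C" and Cm: "\<And>D. is_clique Q S D \<Longrightarrow> C \<subseteq> D \<Longrightarrow> D = C"
      using that(5) unfolding is_maximal_clique_def by blast+
    have CS: "C \<subseteq> S" and CQ: "\<And>x y. x \<in> C \<Longrightarrow> y \<in> C \<Longrightarrow> x \<noteq> y \<Longrightarrow> Q x y"
      using Cc unfolding is_clique_def by blast+
    have "C \<subseteq> S \<inter> N i"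
    proof
      fix y assume y: "y \<in> C"
      have "y \<in> S" using y CS by blast
      moreover have "y \<in> N i"
      proof (cases "y = p")
        case True then show ?thesis using that(2) by simp
      next
        case False
        then have "Q p y" using y that(4) CQ by blast
        then show ?thesis using Qp[OF that(1-3)] by simp
      qed
      ultimately show "y \<in> S \<inter> N i" by simp
    qed
    then show ?thesis using Cm[OF clq[OF that(1)]] by simp
  qed
  have mc: "is_maximal_clique Q S (S \<inter> N i)" if ik: "i < k" for i
  proof -
    obtain p where p: "p \<in> S" "p \<in> N i" "\<forall>j<k. p \<in> N j \<longrightarrow> j = i" using hit[OF ik] by blast
    have "D = S \<inter> N i" if D: "is_clique Q S D" "S \<inter> N i \<subseteq> D" for D
    proof
      show "D \<subseteq> S \<inter> N i"
      proof
        fix y assume y: "y \<in> D"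
        have "y \<in> S" using y D unfolding is_clique_def by auto
        moreover have "y \<in> N i"
        proof (cases "y = p")
          case True then show ?thesis using p(2) by simp
        next
          case False
          have pD: "p \<in> D" using D(2) p(1,2) by blast
          have py: "p \<noteq> y" using False by simp
          have "\<forall>x\<in>D. \<forall>z\<in>D. x \<noteq> z \<longrightarrow> Q x z" using D(1) unfolding is_clique_def by simp
          then have "Q p y" using pD y py by blast
          then show ?thesis using Qp[OF \<open>i < k\<close> p(2,3)] by simp
        qed
        ultimately show "y \<in> S \<inter> N i" by simp
      qed
    qed (use D in auto)
    then show ?thesis unfolding is_maximal_clique_def using clq[OF that] p(1,2) by blast
  qed
  have cov: "covers_graph Q S F0"
    unfolding covers_graph_def
  proof (intro conjI ballI impI)
    fix x assume x: "x \<in> S"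
    then have "x < n" using S by auto
    then have "card {i. i < k \<and> x \<in> N i} \<ge> 1" by (rule atleast)
    then obtain i where "i < k" "x \<in> N i"
      by (metis (mono_tags, lifting) Collect_empty_eq card.empty not_one_le_zero)
    then show "\<exists>C\<in>F0. x \<in> C" unfolding F0_def using x by auto
  next
    fix x y assume "x \<in> S" "y \<in> S" "x \<noteq> y \<and> Q x y"
    then show "\<exists>C\<in>F0. x \<in> C \<and> y \<in> C" unfolding F0_def Q_def same_cluster_def by auto
  qed
  have contains: "F0 \<subseteq> F" if F: "\<forall>C\<in>F. is_maximal_clique Q S C" "covers_graph Q S F" for F
  proof
    fix C assume "C \<in> F0"
    then obtain i where i: "i < k" "C = S \<inter> N i" unfolding F0_def by auto
    obtain p where p: "p \<in> S" "p \<in> N i" "\<forall>j<k. p \<in> N j \<longrightarrow> j = i" using hit[OF i(1)] by blast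
    obtain C' where C': "C' \<in> F" "p \<in> C'" using F(2) p(1) unfolding covers_graph_def by auto
    have "C' = S \<inter> N i" using uniq[OF i(1) p(2,3) C'(2)] F(1) C'(1) by auto
    then show "C \<in> F" using C' i by simp
  qed
  have mcc: "maximal_clique_cover Q S F0"
    unfolding maximal_clique_cover_def
  proof (intro conjI allI impI)
    show "\<forall>C\<in>F0. is_maximal_clique Q S C" unfolding F0_def using mc by auto
    show "covers_graph Q S F0" by (rule cov)
    fix F' assume F': "F' \<subset> F0"
    show "\<not> covers_graph Q S F'"
    proof
      assume c: "covers_graph Q S F'"
      have "\<forall>C\<in>F'. is_maximal_clique Q S C" using F' mc unfolding F0_def by auto
      then have "F0 \<subseteq> F'" using contains c by blast
      then show False using F' by auto
    qed
  qed
  have allF: "F = F0" if "maximal_clique_cover Q S F" for F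
  proof -
    have "F0 \<subseteq> F" using contains that unfolding maximal_clique_cover_def by blast
    moreover have "\<forall>F'. F' \<subset> F \<longrightarrow> \<not> covers_graph Q S F'"
      using that unfolding maximal_clique_cover_def by simp
    then have "\<not> F0 \<subset> F" using cov by blast
    ultimately show ?thesis by blast
  qed
  have ext: "extend_cluster Q n S (S \<inter> N i) = N i" if ik: "i < k" for i
  proof -
    obtain p where p: "p \<in> S" "p \<in> N i" "\<forall>j<k. p \<in> N j \<longrightarrow> j = i" using hit[OF ik] by blast
    have "x \<in> N i" if "x \<in> {0..<n} - S" "\<forall>y\<in>S \<inter> N i. Q x y" for x
    proof -
      have "Q x p" using that p(1,2) by blast
      then have "Q p x" unfolding Q_def same_cluster_def by auto
      then show ?thesis using Qp[OF \<open>i < k\<close> p(2,3)] by simp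
    qed
    moreover have "Q x y" if "x \<in> N i" "y \<in> N i" for x y
      using that \<open>i < k\<close> unfolding Q_def same_cluster_def by auto
    ultimately show ?thesis unfolding extend_cluster_def using sub[OF that] by auto
  qed
  have "extend_cluster Q n S ` F0 = N ` {..<k}"
    unfolding F0_def image_image using ext by auto
  then have R: "\<forall>F. maximal_clique_cover Q S F \<longrightarrow> extend_cluster Q n S ` F = N ` {..<k}"
    using allF by blast
  show ?thesis unfolding recovers_def Q_def[symmetric] using mcc R by blast
qed


lemma miss_bound:
  fixes n k s m :: nat and \<alpha> :: real
  assumes n: "n \<ge> 1" and k: "k \<ge> 1" and m: "real m < real n - \<alpha> * real n"
    and mn: "m \<le> n" and a: "\<alpha> > 0"
    and s_size: "\<alpha> * real s = ln (real k) + ln (real n)"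
  shows "real (m choose s) \<le> real (n choose s) / (real k * real n)"
proof -
  have np: "real n > 0" using n by simp
  have a1: "0 \<le> 1 - \<alpha>"
  proof -
    have "0 < (1 - \<alpha>) * real n" using m by (simp add: algebra_simps)
    then show ?thesis using np by (simp add: zero_less_mult_iff)
  qed
  have "real m \<le> (1 - \<alpha>) * real n" using m by (simp add: algebra_simps)
  then have "real m ^ s \<le> ((1 - \<alpha>) * real n) ^ s" by (intro power_mono) auto
  also have "\<dots> = (1 - \<alpha>) ^ s * real n ^ s" by (simp add: power_mult_distrib)
  also have "(1 - \<alpha>) ^ s \<le> exp (- \<alpha>) ^ s"
    using a1 exp_ge_add_one_self[of "- \<alpha>"] by (intro power_mono) auto
  also have "exp (- \<alpha>) ^ s = exp (- (\<alpha> * real s))"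
    by (simp add: exp_of_nat_mult[symmetric] mult.commute)
  also have "\<dots> = 1 / (real k * real n)"
  proof -
    have "ln (real k) + ln (real n) = ln (real k * real n)" using n k by (simp add: ln_mult)
    moreover have "real k * real n > 0" using n k by simp
    ultimately show ?thesis using s_size by (simp add: exp_minus divide_inverse)
  qed
  finally have ms: "real m ^ s \<le> 1 / (real k * real n) * real n ^ s"
    using np by (simp add: mult_right_mono)
  have "real (m choose s) * real n ^ s \<le> real m ^ s * real (n choose s)"
    by (rule choose_ratio[OF mn])
  also have "\<dots> \<le> 1 / (real k * real n) * real n ^ s * real (n choose s)"
    using ms by (intro mult_right_mono) auto
  finally have "real (m choose s) * real n ^ s \<le> (real (n choose s) / (real k * real n)) * real n ^ s"
    by (simp add: field_simps)
  moreover have "real n ^ s > 0" using np by simp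
  ultimately show ?thesis using mult_le_cancel_right_pos by blast
qed

theorem theorem8:
  fixes n k \<Delta> s :: nat and N :: "nat \<Rightarrow> nat set" and \<alpha> :: real
  assumes sub: "\<And>i. i < k \<Longrightarrow> N i \<subseteq> {0..<n}"
    and atleast: "\<And>x. x < n \<Longrightarrow> card {i. i < k \<and> x \<in> N i} \<ge> 1"
    and atmost: "\<And>x. x < n \<Longrightarrow> card {i. i < k \<and> x \<in> N i} \<le> \<Delta>"
    and alpha_pos: "\<alpha> > 0"
    and priv: "\<And>i. i < k \<Longrightarrow>
          real (card (N i - (\<Union>j\<in>{j. j < k \<and> j \<noteq> i}. N j))) > \<alpha> * real n"
    and s_size: "\<alpha> * real s = ln (real k) + ln (real n)"
    and s_le: "s \<le> n"
  shows "(\<forall>S. S \<subseteq> {0..<n} \<and> card S = s \<longrightarrow>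
            card (queries n S) = (s choose 2) + s * (n - s))
       \<and> measure_pmf.prob (pmf_of_set {S. S \<subseteq> {0..<n} \<and> card S = s})
            {S. recovers N k n S} \<ge> 1 - 1 / real n"
proof (intro conjI allI impI)
  fix S assume "S \<subseteq> {0..<n} \<and> card S = s"
  then show "card (queries n S) = (s choose 2) + s * (n - s)"
    using queries_card by blast
next
  define \<Omega> where "\<Omega> = {S. S \<subseteq> {0..<n} \<and> card S = s}"
  define P where "P i = N i - (\<Union>j\<in>{j. j < k \<and> j \<noteq> i}. N j)" for i
  define Bad where "Bad = (\<Union>i<k. {S\<in>\<Omega>. S \<inter> P i = {}})"
  have cO: "card \<Omega> = n choose s" unfolding \<Omega>_def using n_subsets[of "{0..<n}" s] by simp
  have fO: "finite \<Omega>" unfolding \<Omega>_def by (rule finite_subset[of _ "Pow {0..<n}"]) auto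
  have cOp: "card \<Omega> > 0" using cO s_le by simp
  then have nO: "\<Omega> \<noteq> {}" by auto
  have good: "recovers N k n S" if "S \<in> \<Omega> - Bad" for S
  proof (rule recovery[OF sub atleast])
    show "S \<subseteq> {0..<n}" using that unfolding \<Omega>_def by auto
    fix i assume i: "i < k"
    then have "S \<inter> P i \<noteq> {}" using that unfolding Bad_def by auto
    then obtain p where "p \<in> S" "p \<in> P i" by blast
    then show "\<exists>p\<in>S. p \<in> N i \<and> (\<forall>j<k. p \<in> N j \<longrightarrow> j = i)"
      unfolding P_def by blast
  qed
  have BO: "Bad \<subseteq> \<Omega>" unfolding Bad_def by auto
  have fB: "finite Bad" using BO fO finite_subset by blast
  have cnt: "card {S\<in>\<Omega>. S \<inter> P i = {}} = card ({0..<n} - P i) choose s" for i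
  proof -
    have "{S\<in>\<Omega>. S \<inter> P i = {}} = {S. S \<subseteq> {0..<n} - P i \<and> card S = s}"
      unfolding \<Omega>_def by auto
    then show ?thesis using n_subsets[of "{0..<n} - P i" s] by simp
  qed
  have badb: "real (card Bad) \<le> real (n choose s) / real n"
  proof (cases "n = 0")
    case True
    then have "k = 0"
      using priv[of 0] sub[of 0] by (cases "k = 0") (auto simp: P_def)
    then show ?thesis unfolding Bad_def by simp
  next
    case False
    then have n1: "n \<ge> 1" by simp
    have k1: "k \<ge> 1"
    proof (rule ccontr)
      assume "\<not> k \<ge> 1"
      then have "k = 0" by simp
      then show False using atleast[of 0] n1 by simp
    qed
    have each: "real (card ({0..<n} - P i) choose s) \<le> real (n choose s) / (real k * real n)"
      if i: "i < k" for i
    proof (rule miss_bound[OF n1 k1 _ _ alpha_pos s_size])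
      have PS: "P i \<subseteq> {0..<n}" using sub[OF i] unfolding P_def by auto
      have "card ({0..<n} - P i) = n - card (P i)" using PS by (simp add: card_Diff_subset finite_subset)
      moreover have "card (P i) \<le> n" using PS by (metis card_atLeastLessThan card_mono finite_atLeastLessThan diff_zero)
      moreover have "real (card (P i)) > \<alpha> * real n" using priv[OF i] unfolding P_def by simp
      ultimately show "real (card ({0..<n} - P i)) < real n - \<alpha> * real n"
        and "card ({0..<n} - P i) \<le> n" by (simp_all add: of_nat_diff)
    qed
    have "real (card Bad) \<le> real (\<Sum>i<k. card {S\<in>\<Omega>. S \<inter> P i = {}})"
      unfolding Bad_def by (intro of_nat_mono card_UN_le) simp
    also have "\<dots> = (\<Sum>i<k. real (card ({0..<n} - P i) choose s))" by (simp add: cnt)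
    also have "\<dots> \<le> (\<Sum>i<k. real (n choose s) / (real k * real n))"
      by (intro sum_mono each) simp
    also have "\<dots> = real (n choose s) / real n" using k1 by simp
    finally show ?thesis .
  qed
  have "real (card \<Omega>) - real (card Bad) \<le> real (card (\<Omega> \<inter> {S. recovers N k n S}))"
  proof -
    have "\<Omega> - Bad \<subseteq> \<Omega> \<inter> {S. recovers N k n S}" using good by auto
    then have "card (\<Omega> - Bad) \<le> card (\<Omega> \<inter> {S. recovers N k n S})"
      by (intro card_mono) (use fO in auto)
    moreover have "card (\<Omega> - Bad) = card \<Omega> - card Bad" using BO fB by (simp add: card_Diff_subset)
    moreover have "card Bad \<le> card \<Omega>" using BO fO card_mono by blast
    then have "real (card \<Omega> - card Bad) = real (card \<Omega>) - real (card Bad)" by (rule of_nat_diff)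
    ultimately show ?thesis by (metis of_nat_le_iff)
  qed
  then have X: "real (card \<Omega>) \<le> real (card Bad) + real (card (\<Omega> \<inter> {S. recovers N k n S}))" by simp
  have "1 - 1 / real n \<le> real (card (\<Omega> \<inter> {S. recovers N k n S})) / real (card \<Omega>)"
  proof (cases "n = 0")
    case True
    then have "card Bad = 0" using badb by simp
    then show ?thesis using X cOp True by simp
  next
    case False
    then have np: "real n > 0" by simp
    have B: "real n * real (card Bad) \<le> real (card \<Omega>)"
      using badb np unfolding cO[symmetric] by (simp add: field_simps)
    have "real n * real (card \<Omega>) \<le> real n * (real (card Bad) + real (card (\<Omega> \<inter> {S. recovers N k n S})))"
      using X np by (intro mult_left_mono) auto
    then have "real n * real (card \<Omega>) \<le> real (card \<Omega>) + real n * real (card (\<Omega> \<inter> {S. recovers N k n S}))"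
      using B by (simp add: algebra_simps)
    then show ?thesis using np cOp by (simp add: field_simps)
  qed
  then show "measure_pmf.prob (pmf_of_set {S. S \<subseteq> {0..<n} \<and> card S = s})
            {S. recovers N k n S} \<ge> 1 - 1 / real n"
    unfolding \<Omega>_def[symmetric] using measure_pmf_of_set[OF nO fO] by simp
qed

end
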